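(* Let $A:[0,1]\to\mathbb{R}$, $A(x)=\sin^2(2\pi x)$, and let $T(x)=2x \pmod 1$ act on the circle $S^1=[0,1]/\{0\sim 1\}$, with inverse branches $\tau_1(x)=x/2$ and $\tau_2(x)=(x+1)/2$. Put $\hat m(A)=\frac{A(1/3)+A(2/3)}{2}$, $\eta(x)=\frac{x}{4}+\frac12$, $F(x)=A\left(\frac{x}{2}\right)+A\left(\frac{x}{4}+\frac12\right)$, and for $x\in[0,1]$ $$V_2(x)=\lim_{n\to\infty}\sum_{i=0}^{n-1}\bigl[F(\eta^i(x))-2\hat m(A)\bigr],$$ where $\eta^i$ is the $i$-th iterate of $\eta$ ($\eta^0=\mathrm{id}$). Define $V_1(x)=V_2\left(\frac{x+1}{2}\right)+A\left(\frac{x+1}{2}\right)-\hat m(A)$ and $$V(x)=V_1(x)\,I_{[0,1/2)}(x)+V_2(x)\,I_{[1/2,1]}(x).$$ Then $V$ is a calibrated subaction for $A$, with $\hat m(A)=\frac{A(1/3)+A(2/3)}{2}=m(A)$; that is, for every $x\in[0,1]$, $$V(x)=\max\Bigl\{A\left(\tfrac{x}{2}\right)+V\left(\tfrac{x}{2}\right),\,A\left(\tfrac{x+1}{2}\right)+V\left(\tfrac{x+1}{2}\right)\Bigr\}-m(A).$$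
   Context: $I_E$ denotes the indicator function of $E$. For continuous $A$, $m(A)=\sup\{\int A\,d\rho : \rho \text{ a } T\text{-invariant Borel probability}\}$. A calibrated subaction for $A$ is a continuous function $V:S^1\to\mathbb{R}$ such that $V(x)=\max_{T(y)=x}[A(y)+V(y)-m(A)]$ for all $x$. *)

theory Defs
  imports "HOL-Probability.Probability"
begin

definition A :: "real \<Rightarrow> real" where
  "A x = (sin (2 * pi * x))\<^sup>2"

text \<open>Doubling map on the circle, realised on [0,1) via the fractional part.\<close>
definition T :: "real \<Rightarrow> real" where
  "T x = frac (2 * x)"

definition T_invariant_prob :: "real measure \<Rightarrow> bool" where
  "T_invariant_prob M \<longleftrightarrow> prob_space M \<and> sets M = sets borel \<and>
     emeasure M {0..<1} = 1 \<and> distr M borel T = M"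

definition m :: "(real \<Rightarrow> real) \<Rightarrow> real" where
  "m f = (SUP M \<in> {M. T_invariant_prob M}. integral\<^sup>L M f)"

definition m_hat :: real where
  "m_hat = (A (1/3) + A (2/3)) / 2"

definition eta :: "real \<Rightarrow> real" where
  "eta x = x / 4 + 1 / 2"

definition F :: "real \<Rightarrow> real" where
  "F x = A (x / 2) + A (x / 4 + 1 / 2)"

definition V2 :: "real \<Rightarrow> real" where
  "V2 x = lim (\<lambda>n. \<Sum>i<n. F ((eta ^^ i) x) - 2 * m_hat)"

definition V1 :: "real \<Rightarrow> real" where
  "V1 x = V2 ((x + 1) / 2) + A ((x + 1) / 2) - m_hat"

definition V :: "real \<Rightarrow> real" where
  "V x = V1 x * indicator {0..<1/2} x + V2 x * indicator {1/2..1} x"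

end

theory Submission
  imports Defs
begin


lemma A_sym: "A (1 - z) = A z"
proof -
  have "sin (2*pi*(1-z)) = - sin (2*pi*z)"
    by (simp add: right_diff_distrib sin_diff)
  then show ?thesis unfolding A_def by simp
qed

lemma A_cos: "A z = (1 - cos (4*pi*z)) / 2"
  unfolding A_def using cos_double_sin[of "2*pi*z"] by (simp add: mult.assoc)

lemma cos_43: "cos (4*pi/3) = -1/2" and sin_43: "sin (4*pi/3) = - sqrt 3/2"
proof -
  have e: "4*pi/3 = pi/3 + pi" by simp
  show "cos (4*pi/3) = -1/2" unfolding e cos_periodic_pi cos_60 by simp
  show "sin (4*pi/3) = - sqrt 3/2" unfolding e sin_periodic_pi sin_60 by simp
qed

lemma cos_23: "cos (2*pi/3) = -1/2" and sin_23: "sin (2*pi/3) = sqrt 3/2"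
proof -
  have e: "2*pi/3 = pi - pi/3" by simp
  show "cos (2*pi/3) = -1/2" unfolding e cos_diff cos_60 sin_60 by simp
  show "sin (2*pi/3) = sqrt 3/2" unfolding e sin_diff cos_60 sin_60 by simp
qed

lemma A_13: "A (1/3) = 3/4" and A_23: "A (2/3) = 3/4"
proof -
  show "A (1/3) = 3/4" unfolding A_cos using cos_43 by simp
  have "4*pi*(2/3) = 2*pi/3 + 2*pi" by simp
  hence "cos (4*pi*(2/3)) = cos (2*pi/3 + 2*pi)" by simp
  also have "\<dots> = -1/2" unfolding cos_periodic cos_23 by simp
  finally show "A (2/3) = 3/4" unfolding A_cos by simp
qed

lemma m_hat_val: "m_hat = 3/4" unfolding m_hat_def by (simp add: A_13 A_23)

definition h :: "real \<Rightarrow> real" where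
  "h t = A (1/3 + t/2) + A (2/3 + t/4) - 3/2"

lemma h_explicit: "h t = (cos (2*pi*t) - 1)/4 + (cos (pi*t) - 1)/4 - sqrt 3/4 * (sin (2*pi*t) - sin (pi*t))"
proof -
  have 1: "A (1/3 + t/2) = 1/2 + cos (2*pi*t)/4 - sqrt 3/4 * sin (2*pi*t)"
  proof -
    have e: "4*pi*(1/3 + t/2) = 4*pi/3 + 2*pi*t" by (simp add: field_simps)
    show ?thesis unfolding A_cos e cos_add cos_43 sin_43 by (simp add: field_simps)
  qed
  have 2: "A (2/3 + t/4) = 1/2 + cos (pi*t)/4 + sqrt 3/4 * sin (pi*t)"
  proof -
    have e: "4*pi*(2/3 + t/4) = (2*pi/3 + pi*t) + 2*pi" by (simp add: field_simps)
    show ?thesis unfolding A_cos e cos_periodic cos_add cos_23 sin_23 by (simp add: field_simps)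
  qed
  show ?thesis unfolding h_def 1 2 by (simp add: field_simps)
qed

lemma abs_cos_1: "\<bar>cos (z::real) - 1\<bar> \<le> \<bar>z\<bar>"
proof -
  have "cos z - 1 = - 2 * (sin (z/2))^2" using cos_double_sin[of "z/2"] by simp
  hence "\<bar>cos z - 1\<bar> = 2 * \<bar>sin (z/2)\<bar> * \<bar>sin (z/2)\<bar>" by (simp add: power2_eq_square abs_mult)
  also have "\<dots> \<le> 2 * \<bar>z/2\<bar> * 1"
    by (intro mult_mono) (use abs_sin_x_le_abs_x[of "z/2"] in auto)
  finally show ?thesis by simp
qed

lemma h_bound: "\<bar>h t\<bar> \<le> 9 * \<bar>t\<bar>"
proof -
  have a: "\<bar>cos (2*pi*t) - 1\<bar> \<le> 2*pi*\<bar>t\<bar>" using abs_cos_1[of "2*pi*t"] by (simp add: abs_mult)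
  have b: "\<bar>cos (pi*t) - 1\<bar> \<le> pi*\<bar>t\<bar>" using abs_cos_1[of "pi*t"] by (simp add: abs_mult)
  have c: "\<bar>sin (2*pi*t)\<bar> \<le> 2*pi*\<bar>t\<bar>" using abs_sin_x_le_abs_x[of "2*pi*t"] by (simp add: abs_mult)
  have d: "\<bar>sin (pi*t)\<bar> \<le> pi*\<bar>t\<bar>" using abs_sin_x_le_abs_x[of "pi*t"] by (simp add: abs_mult)
  have s3: "sqrt 3 \<le> 2" by (rule real_sqrt_le_iff[THEN iffD2, of 3 4, unfolded real_sqrt_four]) simp
  have cd: "\<bar>sin (2*pi*t) - sin (pi*t)\<bar> \<le> 3*pi*\<bar>t\<bar>"
    using c d abs_triangle_ineq4[of "sin (2*pi*t)" "sin (pi*t)"] by linarith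
  have e: "\<bar>sqrt 3/4 * (sin (2*pi*t) - sin (pi*t))\<bar> \<le> 2/4 * (3*pi*\<bar>t\<bar>)"
    unfolding abs_mult using s3 cd by (intro mult_mono) auto
  have "\<bar>h t\<bar> \<le> 2*pi*\<bar>t\<bar>/4 + pi*\<bar>t\<bar>/4 + 2/4 * (3*pi*\<bar>t\<bar>)"
  proof -
    have gen: "\<bar>X/4 + Y/4 - Z\<bar> \<le> B1/4 + B2/4 + B3"
      if "\<bar>X\<bar> \<le> B1" "\<bar>Y\<bar> \<le> B2" "\<bar>Z\<bar> \<le> B3" for X Y Z B1 B2 B3 :: real
      using that by arith
    show ?thesis unfolding h_explicit by (rule gen[OF a b e])
  qed
  also have "\<dots> = (9/4) * pi * \<bar>t\<bar>" by simp
  also have "\<dots> \<le> 9 * \<bar>t\<bar>" using pi_less_4 by (intro mult_right_mono) auto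
  finally show ?thesis .
qed



lemma eta_iter: "(eta ^^ i) x = 2/3 + (x - 2/3) / 4^i"
  by (induction i) (auto simp: eta_def field_simps)

lemma F_h: "F y - 3/2 = h (y - 2/3)"
proof -
  have e1: "1/3 + (y-2/3)/2 = y/2" by (simp add: field_simps)
  have e2: "2/3 + (y-2/3)/4 = y/4 + 1/2" by (simp add: field_simps)
  show ?thesis unfolding F_def h_def e1 e2 by simp
qed

lemma summable_h: "summable (\<lambda>j. h (c / 4^j))"
proof (rule summable_comparison_test)
  show "\<exists>N. \<forall>n\<ge>N. norm (h (c / 4^n)) \<le> 9 * \<bar>c\<bar> * (1/4)^n"
  proof (intro exI[of _ 0] allI impI)
    fix n :: nat
    show "norm (h (c / 4^n)) \<le> 9 * \<bar>c\<bar> * (1/4)^n"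
      using h_bound[of "c / 4^n"] by (simp add: power_divide abs_divide)
  qed
  show "summable (\<lambda>n. 9 * \<bar>c\<bar> * (1/4::real)^n)"
    by (intro summable_mult summable_geometric) auto
qed

definition S :: "real \<Rightarrow> real" where
  "S x = (\<Sum>j. h ((x - 2/3) / 4^j))"

lemma V2_S: "V2 x = S x"
proof -
  have "(\<lambda>n. \<Sum>i<n. F ((eta ^^ i) x) - 2 * m_hat) = (\<lambda>n. \<Sum>i<n. h ((x - 2/3) / 4^i))"
    using F_h by (simp add: eta_iter m_hat_val)
  moreover have "(\<lambda>n. \<Sum>i<n. h ((x - 2/3) / 4^i)) \<longlonglongrightarrow> S x"
    unfolding S_def by (rule summable_LIMSEQ[OF summable_h])
  ultimately show ?thesis unfolding V2_def by (simp add: limI)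
qed

lemma S_step: "S x = h (x - 2/3) + S (eta x)"
proof -
  have "S (eta x) = (\<Sum>j. h ((x - 2/3) / 4^(Suc j)))"
    unfolding S_def eta_def by (simp add: field_simps)
  also have "\<dots> = S x - h (x - 2/3)"
    unfolding S_def by (subst suminf_split_head[OF summable_h]) simp
  finally show ?thesis by simp
qed

lemma S_refl: "S (1 - x) = S ((x+1)/2) + A ((x+1)/2) - 3/4"
proof -
  define u where "u = x - 1/3"
  define a where "a j = A (2/3 + u / (2 * 4^j)) - 3/4" for j :: nat
  define b where "b j = A (1/3 + u / 4^(Suc j)) - 3/4" for j :: nat
  have L: "\<And>j. h ((1 - x - 2/3) / 4^j) = a j + b j"
  proof -
    fix j :: nat
    have "A (1/3 + (1 - x - 2/3) / 4^j / 2) = A (1 - (2/3 + u / (2 * 4^j)))"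
      unfolding u_def by (simp add: field_simps)
    moreover have "A (2/3 + (1 - x - 2/3) / 4^j / 4) = A (1 - (1/3 + u / 4^(Suc j)))"
      unfolding u_def by (simp add: field_simps)
    ultimately show "h ((1 - x - 2/3) / 4^j) = a j + b j"
      unfolding h_def a_def b_def A_sym by simp
  qed
  have R: "\<And>j. h (((x+1)/2 - 2/3) / 4^j) = b j + a (Suc j)"
  proof -
    fix j :: nat
    have "A (1/3 + ((x+1)/2 - 2/3) / 4^j / 2) = A (1/3 + u / 4^(Suc j))"
      unfolding u_def by (simp add: field_simps)
    moreover have "A (2/3 + ((x+1)/2 - 2/3) / 4^j / 4) = A (2/3 + u / (2 * 4^(Suc j)))"
      unfolding u_def by (simp add: field_simps)
    ultimately show "h (((x+1)/2 - 2/3) / 4^j) = b j + a (Suc j)"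
      unfolding h_def a_def b_def by simp
  qed
  have a_lim: "a \<longlonglongrightarrow> 0"
  proof -
    have e: "(\<lambda>j. u / (2 * 4^j)) = (\<lambda>j. (u/2) * (1/4::real)^j)"
      by (simp add: power_divide)
    have "(\<lambda>j. u / (2 * 4^j)) \<longlonglongrightarrow> 0"
      by (subst e) (intro tendsto_mult_right_zero LIMSEQ_power_zero; simp)
    hence "(\<lambda>j. 2/3 + u / (2 * 4^j)) \<longlonglongrightarrow> 2/3 + 0" by (intro tendsto_add) auto
    moreover have "isCont A (2/3)" unfolding A_def by (intro continuous_intros)
    ultimately have "(\<lambda>j. A (2/3 + u / (2 * 4^j))) \<longlonglongrightarrow> A (2/3)"
      using isCont_tendsto_compose by fastforce
    hence "(\<lambda>j. A (2/3 + u / (2 * 4^j)) - 3/4) \<longlonglongrightarrow> A (2/3) - 3/4"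
      by (rule tendsto_diff[OF _ tendsto_const])
    thus ?thesis unfolding a_def A_23 by simp
  qed
  have tel: "(\<lambda>j. a j - a (Suc j)) sums (a 0)"
    using telescope_sums'[OF a_lim] by simp
  have sL: "(\<lambda>j. a j + b j) sums S (1 - x)"
    unfolding S_def L[symmetric] by (rule summable_sums[OF summable_h])
  have sR: "(\<lambda>j. b j + a (Suc j)) sums S ((x+1)/2)"
    unfolding S_def R[symmetric] by (rule summable_sums[OF summable_h])
  have "(\<lambda>j. (b j + a (Suc j)) + (a j - a (Suc j))) sums (S ((x+1)/2) + a 0)"
    by (rule sums_add[OF sR tel])
  hence "(\<lambda>j. a j + b j) sums (S ((x+1)/2) + a 0)" by (simp add: algebra_simps)
  hence "S (1 - x) = S ((x+1)/2) + a 0" using sL sums_unique2 by blast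
  moreover have "a 0 = A ((x+1)/2) - 3/4"
  proof -
    have "2/3 + u / (2 * 4^0) = (x+1)/2" unfolding u_def by (simp add: field_simps)
    thus ?thesis unfolding a_def by metis
  qed
  ultimately show ?thesis by simp
qed

lemma S_cal: "S x = A (x/2) + S (1 - x/2) - 3/4"
proof -
  have "S (1 - x/2) = S (eta x) + A (eta x) - 3/4"
    using S_refl[of "x/2"] by (simp add: eta_def field_simps)
  moreover have "h (x - 2/3) = A (x/2) + A (eta x) - 3/2"
    using F_h[of x] unfolding F_def eta_def by simp
  ultimately show ?thesis using S_step[of x] by simp
qed

lemma S_cont: "continuous_on {0..1} S"
proof -
  have ul: "uniform_limit {0..1} (\<lambda>n x. \<Sum>i<n. h ((x - 2/3) / 4^i)) (\<lambda>x. \<Sum>i. h ((x - 2/3) / 4^i)) sequentially"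
  proof (rule Weierstrass_m_test)
    fix n :: nat and x :: real assume "x \<in> {0..1}"
    hence "\<bar>x - 2/3\<bar> \<le> 1" by auto
    hence "\<bar>(x - 2/3) / 4^n\<bar> \<le> 1 / 4^n" by (simp add: abs_divide divide_right_mono)
    thus "norm (h ((x - 2/3) / 4^n)) \<le> 9 * (1/4)^n"
      using h_bound[of "(x - 2/3) / 4^n"] by (simp add: power_divide)
  next
    show "summable (\<lambda>n. 9 * (1/4::real)^n)" by (intro summable_mult summable_geometric) auto
  qed
  have "continuous_on {0..1} (\<lambda>x. \<Sum>i. h ((x - 2/3) / 4^i))"
    by (rule uniform_limit_theorem[OF _ ul]) (auto intro!: always_eventually continuous_intros simp: h_def A_def)
  thus ?thesis unfolding S_def[abs_def] .
qed



definition ef :: "real \<Rightarrow> real \<Rightarrow> real" where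
  "ef a b = 1/2 * sin (pi*a) * sin (pi*b) + sqrt 3/2 * sin (pi*a) * cos (pi*b)
         - sqrt 3/2 * sin (2*pi*a) * cos (2*pi*b) + 1/2 * sin (2*pi*a) * sin (2*pi*b)"

lemma h_diff: "h (a - b) - h (-a - b) = ef a b"
proof -
  have 1: "2*pi*(a-b) = 2*pi*a - 2*pi*b" "pi*(a-b) = pi*a - pi*b"
     "2*pi*(-a-b) = -(2*pi*a) - 2*pi*b" "pi*(-a-b) = -(pi*a) - pi*b"
    by (simp_all add: algebra_simps)
  show ?thesis unfolding h_explicit ef_def 1 cos_diff sin_diff cos_minus sin_minus
    by (simp add: field_simps)
qed

lemma e0: "ef r (1/6) = sin (pi*r)"
proof -
  have a: "pi * (1/6) = pi/6" "2*pi*(1/6) = pi/3" by simp_all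
  have "ef r (1/6) = 1/2 * sin (pi*r) * (1/2) + sqrt 3/2 * sin (pi*r) * (sqrt 3/2)
         - sqrt 3/2 * sin (2*pi*r) * (1/2) + 1/2 * sin (2*pi*r) * (sqrt 3/2)"
    unfolding ef_def a sin_30 cos_30 sin_60 cos_60 by (rule refl)
  also have "\<dots> = sin (pi*r)"
  proof -
    have q: "sqrt 3 * (sqrt 3 * x) = 3 * x" for x by (simp add: mult.assoc[symmetric])
    show ?thesis by (simp add: algebra_simps q)
  qed
  finally show ?thesis .
qed

lemma e_lower:
  assumes "0 \<le> a" "a \<le> 1/8" "0 \<le> b" "b \<le> 1/24"
  shows "ef a b \<ge> - (sqrt 3 * pi * a)"
proof -
  have pa: "0 \<le> pi*a" "pi*a \<le> pi" using assms pi_gt_zero by (auto simp: mult_left_le)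
  have pb: "0 \<le> pi*b" "pi*b \<le> pi/2" using assms pi_gt_zero by (auto simp: mult_left_le)
  have p2a: "0 \<le> 2*pi*a" "2*pi*a \<le> pi" using assms pi_gt_zero by (auto simp: mult_left_le)
  have p2b: "0 \<le> 2*pi*b" "2*pi*b \<le> pi/2" using assms pi_gt_zero by (auto simp: mult_left_le)
  have s1: "0 \<le> sin (pi*a)" using pa by (intro sin_ge_zero) auto
  have s2: "0 \<le> sin (pi*b)" using pb by (intro sin_ge_zero) auto
  have s3: "0 \<le> cos (pi*b)" using pb pi_gt_zero by (intro cos_ge_zero; linarith)
  have s4: "0 \<le> sin (2*pi*a)" using p2a by (intro sin_ge_zero) auto
  have s5: "0 \<le> sin (2*pi*b)" using p2b by (intro sin_ge_zero) auto
  have s6: "cos (2*pi*b) \<le> 1" by simp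
  have s8: "0 \<le> cos (2*pi*b)" using p2b pi_gt_zero by (intro cos_ge_zero; linarith)
  have s7: "sin (2*pi*a) \<le> 2*pi*a" using abs_sin_x_le_abs_x[of "2*pi*a"] p2a by simp
  have r: "0 \<le> sqrt 3" by simp
  have L: "ef a b \<ge> - (sqrt 3/2 * (sin (2*pi*a) * cos (2*pi*b)))"
    unfolding ef_def using s1 s2 s3 s4 s5 s8 r by (simp add: algebra_simps)
  have k: "sin (2*pi*a) * cos (2*pi*b) \<le> (2*pi*a) * 1"
    using s4 s6 s7 s8 by (intro mult_mono) auto
  have "sqrt 3/2 * (sin (2*pi*a) * cos (2*pi*b)) \<le> sqrt 3/2 * ((2*pi*a) * 1)"
    using k r by (intro mult_left_mono) auto
  also have "\<dots> = sqrt 3 * pi * a" by simp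
  finally show ?thesis using L by linarith
qed

lemma sin_lower: assumes "0 \<le> s" "s \<le> 1/2" shows "sqrt 3 * pi * s / 3 \<le> sin (pi * s)"
proof -
  have m2: "(\<Sum>m<3. sin_coeff m * (pi * s) ^ m) = pi * s"
    by (simp add: eval_nat_numeral sin_coeff_def)
  have m: "\<bar>sin (pi * s) - pi * s\<bar> \<le> inverse (fact 3) * \<bar>pi * s\<bar> ^ 3"
    using Maclaurin_sin_bound[of "pi * s" 3] unfolding m2 .
  have "inverse (fact 3) * \<bar>pi * s\<bar> ^ 3 = (pi * s)^3/6"
    using assms by (simp add: eval_nat_numeral abs_mult)
  with m have "\<bar>sin (pi * s) - pi * s\<bar> \<le> (pi * s)^3/6" by simp
  hence 1: "pi * s - (pi * s)^3/6 \<le> sin (pi * s)" using abs_le_D2 by fastforce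
  have sq: "sqrt 3 \<le> 17321/10000"
    by (rule real_le_lsqrt) (auto simp: power2_eq_square)
  have pi1: "pi \<le> 3.15" using pi_approx by simp
  have "s * s \<le> (1/2)*(1/2)" using assms by (intro mult_mono) auto
  hence "s^2 \<le> 1/4" by (simp add: power2_eq_square)
  hence "pi^2 * s^2 \<le> 3.15^2 * (1/4)"
    using pi1 by (intro mult_mono power_mono) auto
  moreover have "(3.15::real)^2 * (1/4) = 2480625/1000000" by (simp add: power2_eq_square)
  ultimately have "pi^2 * s^2 \<le> 2480625/1000000" by simp
  hence "sqrt 3 / 3 \<le> 1 - (pi^2 * s^2)/6" using sq by linarith
  hence "pi * s * (sqrt 3 / 3) \<le> pi * s * (1 - (pi^2 * s^2)/6)"
    using assms by (intro mult_left_mono) auto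
  also have "\<dots> = pi * s - (pi * s)^3/6" by (simp add: algebra_simps power2_eq_square eval_nat_numeral)
  also have "\<dots> \<le> sin (pi * s)" by (rule 1)
  finally have le: "pi * s * (sqrt 3 / 3) \<le> sin (pi * s)" .
  have eq: "sqrt 3 * pi * s / 3 = pi * s * (sqrt 3 / 3)" by simp
  show ?thesis by (rule ord_eq_le_trans[OF eq le])
qed

lemma S_sign:
  assumes "1/2 \<le> y" "y \<le> 1"
  shows "S (1 - y) \<le> S y"
proof -
  define s where "s = y - 1/2"
  have s: "0 \<le> s" "s \<le> 1/2" using assms s_def by auto
  define f where "f j = ef (s / 4^j) (1 / (6 * 4^j))" for j :: nat
  have fj: "f j = h ((y - 2/3) / 4^j) - h ((1 - y - 2/3) / 4^j)" for j
  proof -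
    have "(y - 2/3) / 4^j = s / 4^j - 1 / (6 * 4^j)" "(1 - y - 2/3) / 4^j = - (s / 4^j) - 1 / (6 * 4^j)"
      unfolding s_def by (simp_all add: field_simps)
    thus ?thesis unfolding f_def h_diff[symmetric] by simp
  qed
  have sf: "f sums (S y - S (1 - y))"
    unfolding fj S_def by (intro sums_diff summable_sums summable_h)
  have sumf: "summable f" "suminf f = S y - S (1 - y)"
    using sf by (rule sums_summable, rule sums_unique[symmetric])
  have geo: "(\<lambda>j. - (sqrt 3 * pi * (s / 4^(Suc j)))) sums (- (sqrt 3 * pi * s / 3))"
  proof -
    have "(\<lambda>j. (1/4::real)^j) sums (4/3)" using geometric_sums[of "1/4::real"] by simp
    from sums_mult[OF this, of "- (sqrt 3 * pi * s / 4)"]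
    show ?thesis by (simp add: power_divide field_simps)
  qed
  have low: "- (sqrt 3 * pi * (s / 4^(Suc j))) \<le> f (Suc j)" for j
  proof -
    have "s / 4^(Suc j) \<le> (1/2) / 4" using s
      by (intro frac_le) (auto simp: order_trans[OF _ power_increasing[of 1 "Suc j" "4::real"]])
    moreover have "1 / (6 * 4^(Suc j)) \<le> (1::real)/24"
      using power_increasing[of 1 "Suc j" "4::real"] by (simp add: field_simps)
    ultimately show ?thesis unfolding f_def using s by (intro e_lower) auto
  qed
  have "- (sqrt 3 * pi * s / 3) \<le> (\<Sum>j. f (Suc j))"
    using sums_le[OF low geo] summable_Suc_iff[THEN iffD2, OF sumf(1)] summable_sums by blast
  also have "\<dots> = suminf f - f 0" by (rule suminf_split_head[OF sumf(1)])
  finally have "- (sqrt 3 * pi * s / 3) + f 0 \<le> suminf f" by simp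
  moreover have "f 0 = sin (pi * s)" unfolding f_def using e0 by simp
  ultimately have "0 \<le> suminf f" using sin_lower[OF s] by simp
  thus ?thesis using sumf by simp
qed



lemma T_meas: "T \<in> borel_measurable borel"
  unfolding T_def[abs_def] frac_def by measurable

lemma cos_T: "cos (4*pi*T y) = cos (8*pi*y)"
proof -
  define k where "k = 2 * \<lfloor>2*y\<rfloor>"
  have e: "4*pi*T y = 8*pi*y - (2*pi) * of_int k"
    unfolding T_def frac_def k_def by (simp add: algebra_simps)
  have "cos (8*pi*y - (2*pi) * of_int k) = cos (8*pi*y)"
    by (simp only: cos_diff cos_int_2pin sin_int_2pin mult_1_right mult_zero_right add_0_right)
  thus ?thesis unfolding e .
qed

lemma pointwise: "A y \<le> 3/4 - cos (4*pi*y)/6 + cos (4*pi*T y)/6"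
proof -
  define u where "u = cos (4*pi*y)"
  have c2: "cos (4*pi*T y) = 2*u^2 - 1"
    unfolding cos_T u_def using cos_double_cos[of "4*pi*y"] by (simp add: mult.assoc)
  have sq: "(u + 1/2)^2 = u^2 + u + 1/4" by (simp add: power2_eq_square algebra_simps)
  have eq: "3/4 - u/6 + (2*u^2 - 1)/6 - (1-u)/2 = (u + 1/2)^2/3"
    by (simp add: power2_eq_square field_simps)
  have "0 \<le> (u + 1/2)^2/3" by simp
  thus ?thesis unfolding A_cos c2 u_def[symmetric] using eq by linarith
qed

lemma m_upper:
  assumes "T_invariant_prob M"
  shows "integral\<^sup>L M A \<le> 3/4"
proof -
  from assms have P: "prob_space M" and sM: "sets M = sets borel" and dT: "distr M borel T = M"
    unfolding T_invariant_prob_def by auto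
  interpret prob_space M by (rule P)
  have meas: "f \<in> borel_measurable M" if "f \<in> borel_measurable borel" for f :: "real \<Rightarrow> real"
    by (subst measurable_cong_sets[OF sM refl]) (rule that)
  have TM: "T \<in> measurable M borel" using meas[OF T_meas] .
  define W where "W x = cos (4*pi*x)/6" for x :: real
  have Wb: "W \<in> borel_measurable borel" unfolding W_def[abs_def]
    by (intro borel_measurable_continuous_onI continuous_intros) auto
  have Ab: "A \<in> borel_measurable borel" unfolding A_def[abs_def]
    by (intro borel_measurable_continuous_onI continuous_intros)
  have WTb: "(\<lambda>x. W (T x)) \<in> borel_measurable M" by (rule measurable_compose[OF TM Wb])
  have Wbd: "\<bar>W x\<bar> \<le> 1" for x unfolding W_def by (simp add: abs_cos_le_one[THEN order_trans])
  have intA: "integrable M A"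
    by (rule integrable_const_bound[where B=1]) (auto simp: A_def abs_square_le_1 meas[OF Ab])
  have intW: "integrable M W"
    by (rule integrable_const_bound[where B=1]) (auto intro!: AE_I2 simp: Wbd meas[OF Wb])
  have intWT: "integrable M (\<lambda>x. W (T x))"
    by (rule integrable_const_bound[where B=1]) (auto intro!: AE_I2 simp: Wbd WTb)
  have eqT: "(\<integral>x. W (T x) \<partial>M) = (\<integral>x. W x \<partial>M)"
  proof -
    have "(\<integral>x. W (T x) \<partial>M) = (\<integral>x. W x \<partial>(distr M borel T))"
      by (rule integral_distr[symmetric, OF TM Wb])
    also have "\<dots> = (\<integral>x. W x \<partial>M)" using dT by simp
    finally show ?thesis .
  qed
  have "integral\<^sup>L M A \<le> (\<integral>x. (3/4 - W x) + W (T x) \<partial>M)"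
    using pointwise
    by (intro integral_mono intA Bochner_Integration.integrable_add Bochner_Integration.integrable_diff intW intWT integrable_const)
       (auto simp: W_def)
  also have "\<dots> = 3/4 - (\<integral>x. W x \<partial>M) + (\<integral>x. W (T x) \<partial>M)"
    using intW intWT by (simp add: Bochner_Integration.integral_add Bochner_Integration.integral_diff prob_space)
  also have "\<dots> = 3/4" using eqT by simp
  finally show ?thesis .
qed

lemma T_13: "T (1/3) = 2/3" and T_23: "T (2/3) = 1/3"
proof -
  show "T (1/3) = 2/3" unfolding T_def by (simp add: frac_eq)
  have "\<lfloor>(4/3::real)\<rfloor> = 1" by (simp add: floor_eq_iff)
  thus "T (2/3) = 1/3" unfolding T_def frac_def by simp
qed

lemma m_lower:
  defines "p \<equiv> pmf_of_set {1/3, 2/3::real}"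
  defines "M0 \<equiv> distr (measure_pmf p) borel (\<lambda>x. x)"
  shows "T_invariant_prob M0" "integral\<^sup>L M0 A = 3/4"
proof -
  have ne: "{1/3, 2/3::real} \<noteq> {}" "finite {1/3, 2/3::real}" by auto
  have mp: "p = map_pmf T p"
  proof -
    have "map_pmf T p = pmf_of_set (T ` {1/3, 2/3})"
      unfolding p_def by (rule map_pmf_of_set_inj) (auto simp: inj_on_def T_13 T_23)
    also have "T ` {1/3, 2/3} = {1/3, 2/3::real}" by (auto simp: T_13 T_23)
    finally show ?thesis unfolding p_def by simp
  qed
  have "prob_space M0" unfolding M0_def
    by (intro prob_space.prob_space_distr prob_space_measure_pmf) simp
  moreover have "sets M0 = sets borel" unfolding M0_def by simp
  moreover have "emeasure M0 {0..<1} = 1"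
  proof -
    have "emeasure M0 {0..<1} = emeasure (measure_pmf p) {0..<1}"
      unfolding M0_def by (subst emeasure_distr) auto
    also have "\<dots> = 1" unfolding p_def using ne
      by (subst emeasure_pmf_of_set) auto
    finally show ?thesis .
  qed
  moreover have "distr M0 borel T = M0"
  proof -
    have "distr M0 borel T = distr (measure_pmf p) borel (T \<circ> (\<lambda>x. x))"
      unfolding M0_def by (rule distr_distr) (auto intro: T_meas)
    also have "\<dots> = distr (measure_pmf p) borel ((\<lambda>x. x) \<circ> T)" by (simp add: comp_def)
    also have "\<dots> = distr (distr (measure_pmf p) (count_space UNIV) T) borel (\<lambda>x. x)"
      by (subst distr_distr) (auto simp: comp_def)
    also have "\<dots> = distr (measure_pmf (map_pmf T p)) borel (\<lambda>x. x)"
      by (simp add: map_pmf_rep_eq)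
    also have "\<dots> = M0" unfolding M0_def using mp by simp
    finally show ?thesis .
  qed
  ultimately show "T_invariant_prob M0" unfolding T_invariant_prob_def by simp
  have Ab: "A \<in> borel_measurable borel" unfolding A_def[abs_def]
    by (intro borel_measurable_continuous_onI continuous_intros)
  have "integral\<^sup>L M0 A = integral\<^sup>L (measure_pmf p) A"
    unfolding M0_def by (subst integral_distr) (auto simp: Ab)
  also have "\<dots> = (A (1/3) + A (2/3)) / 2" unfolding p_def using ne
    by (subst integral_pmf_of_set) auto
  also have "\<dots> = 3/4" by (simp add: A_13 A_23)
  finally show "integral\<^sup>L M0 A = 3/4" .
qed

lemma mA: "m A = 3/4"
proof -
  obtain M0 where M0: "T_invariant_prob M0" "integral\<^sup>L M0 A = 3/4" using m_lower by blast
  show ?thesis unfolding m_def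
    by (rule cSup_eq_maximum) (use M0 m_upper in force)+
qed



lemma V_S: assumes "z \<in> {0..1}" shows "V z = S (max z (1 - z))"
proof (cases "z < 1/2")
  case True
  hence "V z = V1 z" unfolding V_def using assms by (simp add: indicator_def)
  also have "\<dots> = S (1 - z)" unfolding V1_def V2_S m_hat_val using S_refl[of z] by simp
  finally show ?thesis using True by (simp add: max_def)
next
  case False
  hence "V z = V2 z" unfolding V_def using assms by (simp add: indicator_def)
  moreover have "max z (1 - z) = z" using False by simp
  ultimately show ?thesis by (simp add: V2_S)
qed

theorem mainTheorem1:
  shows "m_hat = m A \<and>
    continuous_on {0..1} V \<and> V 0 = V 1 \<and>
    (\<forall>x\<in>{0..1::real}. V x = max (A (x / 2) + V (x / 2)) (A ((x + 1) / 2) + V ((x + 1) / 2)) - m A)"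
proof (intro conjI ballI)
  show "m_hat = m A" by (simp add: mA m_hat_val)
  have c: "continuous_on {0..1} (\<lambda>z::real. max z (1 - z))" by (intro continuous_intros)
  have img: "(\<lambda>z::real. max z (1 - z)) ` {0..1} \<subseteq> {0..1}" by auto
  have "continuous_on {0..1} (\<lambda>z. S (max z (1 - z)))"
    by (rule continuous_on_compose2[OF S_cont c img])
  moreover have "continuous_on {0..1} V = continuous_on {0..1} (\<lambda>z. S (max z (1 - z)))"
    by (rule continuous_on_cong[OF refl V_S])
  ultimately show "continuous_on {0..1} V" by simp
  show "V 0 = V 1" using V_S[of 0] V_S[of 1] by simp
  fix x :: real assume x: "x \<in> {0..1}"
  have b1: "A (x/2) + V (x/2) = S x + 3/4"
  proof -
    have "x/2 \<le> 1 - x/2" using x by simp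
    hence "max (x/2) (1 - x/2) = 1 - x/2" by (rule max_absorb2)
    hence mx: "max (x/2) (1 - x/2) = 1 - x/2" .
    have vx: "x/2 \<in> {0..1}" using x by simp
    have "V (x/2) = S (1 - x/2)" using V_S[OF vx] unfolding mx .
    thus ?thesis using S_cal[of x] by simp
  qed
  have b2: "A ((x+1)/2) + V ((x+1)/2) = S (1 - x) + 3/4"
  proof -
    have "1 - (x+1)/2 \<le> (x+1)/2" using x by (simp add: field_simps)
    hence "max ((x+1)/2) (1 - (x+1)/2) = (x+1)/2" by (rule max_absorb1)
    hence mx: "max ((x+1)/2) (1 - (x+1)/2) = (x+1)/2" .
    have vx: "(x+1)/2 \<in> {0..1}" using x by simp
    have "V ((x+1)/2) = S ((x+1)/2)" using V_S[OF vx] unfolding mx .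
    thus ?thesis using S_refl[of x] by simp
  qed
  have mm: "max (S x) (S (1 - x)) = S (max x (1 - x))"
  proof (cases "1/2 \<le> x")
    case True
    have s1: "S (1 - x) \<le> S x" using S_sign[of x] True x by simp
    have "1 - x \<le> x" using True by simp
    hence "max x (1 - x) = x" by (rule max_absorb1)
    thus ?thesis using max_absorb1[OF s1] by simp
  next
    case False
    have s1: "S (1 - (1 - x)) \<le> S (1 - x)" using S_sign[of "1 - x"] False x by simp
    hence s2: "S x \<le> S (1 - x)" by simp
    have "x \<le> 1 - x" using False by simp
    hence "max x (1 - x) = 1 - x" by (rule max_absorb2)
    thus ?thesis using max_absorb2[OF s2] by simp
  qed
  thus "V x = max (A (x / 2) + V (x / 2)) (A ((x + 1) / 2) + V ((x + 1) / 2)) - m A"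
  proof -
    have "max (S x + 3/4) (S (1 - x) + 3/4) = max (S x) (S (1 - x)) + 3/4" by (simp add: max_def)
    thus ?thesis unfolding b1 b2 mA mm V_S[OF x] by simp
  qed
qed

end
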